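(* Let $G$ be a compact Hausdorff topological group. If $X$ is a completely normal Hausdorff $G$-space, then $X$ is $G$-completely normal.
   Context: A space is completely normal if any two subsets $A,B$ with $\overline A\cap B=\emptyset=A\cap\overline B$ have disjoint open neighbourhoods. A $G$-space $X$ is $G$-completely normal if any two $G$-invariant subsets $A,B\subseteq X$ with $\overline A\cap B=\emptyset=A\cap\overline B$ have disjoint $G$-invariant open neighbourhoods. *)

theory Defs
  imports "HOL-Analysis.Analysis" "HOL-Algebra.Group_Action"
begin

definition topological_group :: "('g, 'm) monoid_scheme \<Rightarrow> 'g topology \<Rightarrow> bool" where
  "topological_group G T \<longleftrightarrow>
     group G \<and> topspace T = carrier G \<and>
     continuous_map (prod_topology T T) T (\<lambda>(g, h). g \<otimes>\<^bsub>G\<^esub> h) \<and>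
     continuous_map T T (\<lambda>g. inv\<^bsub>G\<^esub> g)"

definition G_space :: "('g, 'm) monoid_scheme \<Rightarrow> 'g topology \<Rightarrow> 'a topology \<Rightarrow> ('g \<Rightarrow> 'a \<Rightarrow> 'a) \<Rightarrow> bool" where
  "G_space G T X \<phi> \<longleftrightarrow>
     topological_group G T \<and> group_action G (topspace X) \<phi> \<and>
     continuous_map (prod_topology T X) X (\<lambda>(g, x). \<phi> g x)"

definition G_invariant :: "('g, 'm) monoid_scheme \<Rightarrow> ('g \<Rightarrow> 'a \<Rightarrow> 'a) \<Rightarrow> 'a set \<Rightarrow> bool" where
  "G_invariant G \<phi> S \<longleftrightarrow> (\<forall>g \<in> carrier G. \<phi> g ` S = S)"

definition completely_normal_space :: "'a topology \<Rightarrow> bool" where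
  "completely_normal_space X \<longleftrightarrow>
     (\<forall>A B. A \<subseteq> topspace X \<and> B \<subseteq> topspace X \<and>
        X closure_of A \<inter> B = {} \<and> A \<inter> X closure_of B = {} \<longrightarrow>
        (\<exists>U V. openin X U \<and> openin X V \<and> A \<subseteq> U \<and> B \<subseteq> V \<and> U \<inter> V = {}))"

definition G_completely_normal :: "('g, 'm) monoid_scheme \<Rightarrow> 'a topology \<Rightarrow> ('g \<Rightarrow> 'a \<Rightarrow> 'a) \<Rightarrow> bool" where
  "G_completely_normal G X \<phi> \<longleftrightarrow>
     (\<forall>A B. A \<subseteq> topspace X \<and> B \<subseteq> topspace X \<and>
        G_invariant G \<phi> A \<and> G_invariant G \<phi> B \<and>
        X closure_of A \<inter> B = {} \<and> A \<inter> X closure_of B = {} \<longrightarrow>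
        (\<exists>U V. openin X U \<and> openin X V \<and> G_invariant G \<phi> U \<and> G_invariant G \<phi> V \<and>
               A \<subseteq> U \<and> B \<subseteq> V \<and> U \<inter> V = {}))"

end

theory Submission
  imports Defs
begin

lemma core_open_inv:
  assumes tg: "topological_group G T" and cs: "compact_space T"
    and gs: "G_space G T X \<phi>" and U: "openin X U"
  defines "W \<equiv> {x \<in> topspace X. \<forall>g\<in>carrier G. \<phi> g x \<in> U}"
  shows "openin X W" "G_invariant G \<phi> W" "W \<subseteq> U"
    "\<And>A. A \<subseteq> U \<Longrightarrow> A \<subseteq> topspace X \<Longrightarrow> G_invariant G \<phi> A \<Longrightarrow> A \<subseteq> W"
proof -
  have ga: "group_action G (topspace X) \<phi>" and cm: "continuous_map (prod_topology T X) X (\<lambda>(g, x). \<phi> g x)"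
    using gs by (auto simp: G_space_def)
  have grp: "group G" and tT: "topspace T = carrier G" using tg by (auto simp: topological_group_def)
  define C where "C = {p \<in> topspace (prod_topology T X). (\<lambda>(g, x). \<phi> g x) p \<in> topspace X - U}"
  have "closedin (prod_topology T X) C"
    unfolding C_def by (rule closedin_continuous_map_preimage[OF cm]) (use U in auto)
  then have cl: "closedin X (snd ` C)"
    using closed_map_snd[OF cs, of X] by (auto simp: closed_map_def)
  have "W = topspace X - snd ` C"
  proof (rule equalityI; rule subsetI)
    fix x assume "x \<in> W" then show "x \<in> topspace X - snd ` C"
      by (auto simp: W_def C_def tT)
  next
    fix x assume x: "x \<in> topspace X - snd ` C"
    show "x \<in> W" unfolding W_def
    proof (intro CollectI conjI ballI)
      show "x \<in> topspace X" using x by auto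
      fix g assume g: "g \<in> carrier G"
      have "(g, x) \<notin> C" using x by (metis DiffD2 image_eqI snd_conv)
      moreover have "\<phi> g x \<in> topspace X" using group_action.element_image[OF ga g] x by auto
      ultimately show "\<phi> g x \<in> U" using g x by (auto simp: C_def tT)
    qed
  qed
  then show "openin X W" using cl by auto
  show "W \<subseteq> U"
  proof
    fix x assume "x \<in> W"
    moreover have "\<one>\<^bsub>G\<^esub> \<in> carrier G" using grp by (simp add: group.is_monoid monoid.one_closed)
    moreover have "\<phi> \<one>\<^bsub>G\<^esub> x = x" if "x \<in> topspace X"
      using group_action.id_eq_one[OF ga] that by (metis restrict_apply)
    ultimately show "x \<in> U" unfolding W_def by auto
  qed
  show "G_invariant G \<phi> W" unfolding G_invariant_def
  proof (intro ballI equalityI subsetI)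
    fix h y assume h: "h \<in> carrier G" and "y \<in> \<phi> h ` W"
    then obtain x where x: "x \<in> W" "y = \<phi> h x" by auto
    have xt: "x \<in> topspace X" using x by (auto simp: W_def)
    show "y \<in> W" unfolding W_def
    proof (intro CollectI conjI ballI)
      show "y \<in> topspace X" using group_action.element_image[OF ga h xt] x by auto
      fix g assume g: "g \<in> carrier G"
      have "\<phi> g y = \<phi> (g \<otimes>\<^bsub>G\<^esub> h) x"
        using group_action.composition_rule[OF ga xt g h] x by simp
      moreover have "g \<otimes>\<^bsub>G\<^esub> h \<in> carrier G" using g h grp by (simp add: group.is_monoid monoid.m_closed)
      ultimately show "\<phi> g y \<in> U" using x by (auto simp: W_def)
    qed
  next
    fix h y assume h: "h \<in> carrier G" and y: "y \<in> W"
    have yt: "y \<in> topspace X" using y by (auto simp: W_def)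
    have ih: "inv\<^bsub>G\<^esub> h \<in> carrier G" using h grp by simp
    have e: "\<phi> h (\<phi> (inv\<^bsub>G\<^esub> h) y) = y"
      using group_action.orbit_sym_aux[OF ga ih yt refl] grp h by (simp add: group.inv_inv)
    have "\<phi> (inv\<^bsub>G\<^esub> h) y \<in> W" unfolding W_def
    proof (intro CollectI conjI ballI)
      show "\<phi> (inv\<^bsub>G\<^esub> h) y \<in> topspace X" using group_action.element_image[OF ga ih yt] by auto
      fix g assume g: "g \<in> carrier G"
      have "\<phi> g (\<phi> (inv\<^bsub>G\<^esub> h) y) = \<phi> (g \<otimes>\<^bsub>G\<^esub> inv\<^bsub>G\<^esub> h) y"
        using group_action.composition_rule[OF ga yt g ih] by simp
      moreover have "g \<otimes>\<^bsub>G\<^esub> inv\<^bsub>G\<^esub> h \<in> carrier G" using g ih grp by (simp add: group.is_monoid monoid.m_closed)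
      ultimately show "\<phi> g (\<phi> (inv\<^bsub>G\<^esub> h) y) \<in> U" using y by (auto simp: W_def)
    qed
    then show "y \<in> \<phi> h ` W" using e by (metis image_eqI)
  qed
  fix A assume AU: "A \<subseteq> U" and AX: "A \<subseteq> topspace X" and Ai: "G_invariant G \<phi> A"
  show "A \<subseteq> W"
  proof
    fix x assume x: "x \<in> A"
    have "\<phi> g x \<in> U" if "g \<in> carrier G" for g
      using Ai that x AU unfolding G_invariant_def by blast
    then show "x \<in> W" using x AX by (auto simp: W_def)
  qed
qed

theorem lemma3p12:
  fixes G :: "('g, 'm) monoid_scheme" and T :: "'g topology"
    and X :: "'a topology" and \<phi> :: "'g \<Rightarrow> 'a \<Rightarrow> 'a"
  assumes "topological_group G T" and "compact_space T" and "Hausdorff_space T"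
    and "G_space G T X \<phi>"
    and "completely_normal_space X" and "Hausdorff_space X"
  shows "G_completely_normal G X \<phi>"
  unfolding G_completely_normal_def
proof (intro allI impI)
  fix A B assume h: "A \<subseteq> topspace X \<and> B \<subseteq> topspace X \<and>
        G_invariant G \<phi> A \<and> G_invariant G \<phi> B \<and>
        X closure_of A \<inter> B = {} \<and> A \<inter> X closure_of B = {}"
  then obtain U V where UV: "openin X U" "openin X V" "A \<subseteq> U" "B \<subseteq> V" "U \<inter> V = {}"
  proof -
    have "\<exists>U V. openin X U \<and> openin X V \<and> A \<subseteq> U \<and> B \<subseteq> V \<and> U \<inter> V = {}"
    proof -
      have c: "\<forall>A B. A \<subseteq> topspace X \<and> B \<subseteq> topspace X \<and>
        X closure_of A \<inter> B = {} \<and> A \<inter> X closure_of B = {} \<longrightarrow>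
        (\<exists>U V. openin X U \<and> openin X V \<and> A \<subseteq> U \<and> B \<subseteq> V \<and> U \<inter> V = {})"
        using assms(5) unfolding completely_normal_space_def .
      have p: "A \<subseteq> topspace X \<and> B \<subseteq> topspace X \<and>
        X closure_of A \<inter> B = {} \<and> A \<inter> X closure_of B = {}" using h by simp
      show ?thesis using mp[OF spec[OF spec[OF c, of A], of B] p] .
    qed
    then show ?thesis using that by blast
  qed
  note cU = core_open_inv[OF assms(1,2,4) UV(1)]
  note cV = core_open_inv[OF assms(1,2,4) UV(2)]
  show "\<exists>U V. openin X U \<and> openin X V \<and> G_invariant G \<phi> U \<and> G_invariant G \<phi> V \<and>
               A \<subseteq> U \<and> B \<subseteq> V \<and> U \<inter> V = {}"
  proof (intro exI conjI)
    have hA: "A \<subseteq> topspace X" "G_invariant G \<phi> A" and hB: "B \<subseteq> topspace X" "G_invariant G \<phi> B"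
      using h by simp_all
    show "A \<subseteq> {x \<in> topspace X. \<forall>g\<in>carrier G. \<phi> g x \<in> U}" by (rule cU(4)[OF UV(3) hA])
    show "B \<subseteq> {x \<in> topspace X. \<forall>g\<in>carrier G. \<phi> g x \<in> V}" by (rule cV(4)[OF UV(4) hB])
    show "{x \<in> topspace X. \<forall>g\<in>carrier G. \<phi> g x \<in> U} \<inter> {x \<in> topspace X. \<forall>g\<in>carrier G. \<phi> g x \<in> V} = {}"
      using cU(3) cV(3) UV(5) by blast
  qed (rule cU(1) cV(1) cU(2) cV(2))+
qed

end
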